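(* Let $n\ge1$, $\mathcal{D}=\{u\in(0,1)^n:\sum_{i=1}^nu_i<1\}$, $u_0=1-\sum_{i=1}^nu_i$. Let $k_{ij}=k_{ji}>0$ for $i\ne j$ and $k_{ii}=0$ ($i,j=0,\ldots,n$). Let $q_{ij}\ge0$, $r_{ij}=r_{ji}\ge0$ be constants with $q_{i0}=q_{0i}=r_{i0}=r_{ii}=0$, such that $(q_{ij}+r_{ij})_{i,j=1}^n$ is positive definite and $q_{ij}\ge r_{ij}$ for $i,j=1,\ldots,n$. Define, for $i,j=1,\ldots,n$, with $q_i(u)=\sum_{j=1}^nq_{ij}u_j$, $r_i(u)=\sum_{j=1}^nr_{ij}u_j$, $$A_{ij}(u)=(q_i(u)-r_i(u))\delta_{ij}+u_i\Big(q_{ij}-q_j(u)+r_{ij}+r_j(u)-\sum_{\ell=1}^nu_\ell(q_{\ell j}+r_{\ell j})\Big),$$ $$K_{ii}(u)=\sum_{\ell=0}^nk_{i\ell}u_\ell+k_{i0}u_i,\qquad K_{ij}(u)=(k_{i0}-k_{ij})u_i\ (i\ne j).$$ Then for every $u\in\mathcal{D}$, $K(u)$ is invertible and $K(u)^{-1}A(u)$ is positively stable, i.e., all its eigenvalues have positive real parts.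
   Context: $K(u)$ encodes the drag forces: $\sum_{j=0}^nk_{ij}u_iu_j(v_i-v_j)=(K(u)J)_i$ with $J_i=u_iv_i$ and $J_0=-\sum_{i\ge1}J_i$; the multiphase system then reads $\partial_tu=\operatorname{div}(K(u)^{-1}A(u)\nabla u)$. Positive definiteness of a matrix refers to its symmetric part. *)

theory Defs
  imports "Jordan_Normal_Form.Jordan_Normal_Form"
begin

definition u0 :: "nat \<Rightarrow> (nat \<Rightarrow> real) \<Rightarrow> real" where
  "u0 n u = 1 - (\<Sum>i=1..n. u i)"

definition ufull :: "nat \<Rightarrow> (nat \<Rightarrow> real) \<Rightarrow> nat \<Rightarrow> real" where
  "ufull n u l = (if l = 0 then u0 n u else u l)"

definition in_D :: "nat \<Rightarrow> (nat \<Rightarrow> real) \<Rightarrow> bool" where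
  "in_D n u \<longleftrightarrow> (\<forall>i\<in>{1..n}. 0 < u i \<and> u i < 1) \<and> (\<Sum>i=1..n. u i) < 1"

definition qv :: "nat \<Rightarrow> (nat \<Rightarrow> nat \<Rightarrow> real) \<Rightarrow> (nat \<Rightarrow> real) \<Rightarrow> nat \<Rightarrow> real" where
  "qv n q u i = (\<Sum>j=1..n. q i j * u j)"

text \<open>Matrix A(u); entry (i,j) (0-based, i,j < n) corresponds to indices i+1, j+1.\<close>
definition A_entry :: "nat \<Rightarrow> (nat \<Rightarrow> nat \<Rightarrow> real) \<Rightarrow> (nat \<Rightarrow> nat \<Rightarrow> real)
    \<Rightarrow> (nat \<Rightarrow> real) \<Rightarrow> nat \<Rightarrow> nat \<Rightarrow> real" where
  "A_entry n q r u i j =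
     (if i = j then qv n q u i - qv n r u i else 0)
     + u i * (q i j - qv n q u j + r i j + qv n r u j
              - (\<Sum>l=1..n. u l * (q l j + r l j)))"

definition A_mat :: "nat \<Rightarrow> (nat \<Rightarrow> nat \<Rightarrow> real) \<Rightarrow> (nat \<Rightarrow> nat \<Rightarrow> real)
    \<Rightarrow> (nat \<Rightarrow> real) \<Rightarrow> real mat" where
  "A_mat n q r u = mat n n (\<lambda>(i, j). A_entry n q r u (Suc i) (Suc j))"

definition K_entry :: "nat \<Rightarrow> (nat \<Rightarrow> nat \<Rightarrow> real) \<Rightarrow> (nat \<Rightarrow> real) \<Rightarrow> nat \<Rightarrow> nat \<Rightarrow> real" where
  "K_entry n k u i j =
     (if i = j then (\<Sum>l=0..n. k i l * ufull n u l) + k i 0 * u i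
      else (k i 0 - k i j) * u i)"

definition K_mat :: "nat \<Rightarrow> (nat \<Rightarrow> nat \<Rightarrow> real) \<Rightarrow> (nat \<Rightarrow> real) \<Rightarrow> real mat" where
  "K_mat n k u = mat n n (\<lambda>(i, j). K_entry n k u (Suc i) (Suc j))"

text \<open>Positive definiteness of a (not necessarily symmetric) matrix = positive definiteness
  of its symmetric part.\<close>
definition pos_def_sym :: "real mat \<Rightarrow> bool" where
  "pos_def_sym M \<longleftrightarrow> (\<forall>x \<in> carrier_vec (dim_row M). x \<noteq> 0\<^sub>v (dim_row M) \<longrightarrow>
      x \<bullet> (((1/2) \<cdot>\<^sub>m (M + transpose_mat M)) *\<^sub>v x) > 0)"

definition positively_stable :: "real mat \<Rightarrow> bool" where
  "positively_stable M \<longleftrightarrow>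
     (\<forall>ev. eigenvalue (map_mat complex_of_real M) ev \<longrightarrow> Re ev > 0)"

end

theory Submission
  imports Defs
begin


lemma aux2: "(x::real) = a - 2 * b + a \<Longrightarrow> x = 2 * (a - b)" by simp

lemma F2_expand:
  fixes k :: "nat \<Rightarrow> nat \<Rightarrow> real" and u y :: "nat \<Rightarrow> real"
  assumes un: "\<And>i. i \<in> {1..n} \<Longrightarrow> u i \<noteq> 0"
  and ksym: "\<forall>i\<in>{0..n}. \<forall>j\<in>{0..n}. k i j = k j i"
  shows "(\<Sum>j=1..n. \<Sum>i=1..n. k i j * u i * u j * (y i / u i - y j / u j)^2) = 2 * ((\<Sum>j=1..n. y j ^ 2 / u j * (\<Sum>l=1..n. k j l * u l))
      - (\<Sum>j=1..n. \<Sum>i=1..n. y j * y i * k i j))"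
  proof -
    have "(\<Sum>j=1..n. \<Sum>i=1..n. k i j * u i * u j * (y i / u i - y j / u j)^2) = (\<Sum>j=1..n. \<Sum>i=1..n. k i j * u j * y i ^ 2 / u i - 2 * (y j * y i * k i j) + k i j * u i * y j ^ 2 / u j)"
    proof (intro sum.cong refl)
      fix j i assume "i \<in> {1..n}" "j \<in> {1..n}"
      then have "u i \<noteq> 0" "u j \<noteq> 0" by (simp_all add: un)
      then show "k i j * u i * u j * (y i / u i - y j / u j)^2 =
         k i j * u j * y i ^ 2 / u i - 2 * (y j * y i * k i j) + k i j * u i * y j ^ 2 / u j"
        by (simp add: field_simps power2_eq_square)
    qed
    also have "\<dots> = (\<Sum>j=1..n. \<Sum>i=1..n. k i j * u j * y i ^ 2 / u i) - 2 * (\<Sum>j=1..n. \<Sum>i=1..n. y j * y i * k i j)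
        + (\<Sum>j=1..n. \<Sum>i=1..n. k i j * u i * y j ^ 2 / u j)"
      by (simp only: sum.distrib sum_subtractf sum_distrib_left[symmetric])
    also have "(\<Sum>j=1..n. \<Sum>i=1..n. k i j * u j * y i ^ 2 / u i) = (\<Sum>i=1..n. \<Sum>j=1..n. k i j * u j * y i ^ 2 / u i)"
      by (rule sum.swap)
    also have "\<dots> = (\<Sum>j=1..n. y j ^ 2 / u j * (\<Sum>l=1..n. k j l * u l))"
      by (simp add: sum_distrib_left mult_ac)
    also have "(\<Sum>j=1..n. \<Sum>i=1..n. k i j * u i * y j ^ 2 / u j) = (\<Sum>j=1..n. y j ^ 2 / u j * (\<Sum>l=1..n. k j l * u l))"
      unfolding sum_distrib_left
    proof (intro sum.cong refl)
      fix j i assume "i \<in> {1..n}" "j \<in> {1..n}"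
      then have "k i j = k j i" using ksym by auto
      then show "k i j * u i * y j ^ 2 / u j = y j ^ 2 / u j * (k j i * u i)" by simp
    qed
    finally show ?thesis by (rule aux2)
  qed

lemma bswap:
  fixes M :: "nat \<Rightarrow> nat \<Rightarrow> real"
  shows "(\<Sum>i\<in>I. p i * (\<Sum>j\<in>I. M i j * z j)) = (\<Sum>j\<in>I. z j * (\<Sum>i\<in>I. p i * M i j))"
proof -
  have "(\<Sum>i\<in>I. p i * (\<Sum>j\<in>I. M i j * z j)) = (\<Sum>i\<in>I. \<Sum>j\<in>I. p i * M i j * z j)"
    by (simp add: sum_distrib_left mult.assoc)
  also have "\<dots> = (\<Sum>j\<in>I. \<Sum>i\<in>I. p i * M i j * z j)" by (rule sum.swap)
  also have "\<dots> = (\<Sum>j\<in>I. z j * (\<Sum>i\<in>I. p i * M i j))" by (simp add: sum_distrib_left mult_ac)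
  finally show ?thesis .
qed

lemma cform:
  fixes M :: "nat \<Rightarrow> nat \<Rightarrow> real" and a b pa pb :: "nat \<Rightarrow> real" and I :: "nat set"
  defines "W \<equiv> (\<Sum>i\<in>I. (complex_of_real (pa i) - \<i> * complex_of_real (pb i)) *
      (\<Sum>j\<in>I. complex_of_real (M i j) * Complex (a j) (b j)))"
  shows "Re W = (\<Sum>i\<in>I. pa i * (\<Sum>j\<in>I. M i j * a j)) + (\<Sum>i\<in>I. pb i * (\<Sum>j\<in>I. M i j * b j))"
    and "Im W = (\<Sum>i\<in>I. pa i * (\<Sum>j\<in>I. M i j * b j)) - (\<Sum>i\<in>I. pb i * (\<Sum>j\<in>I. M i j * a j))"
proof -
  have inner: "(\<Sum>j\<in>I. complex_of_real (M i j) * Complex (a j) (b j))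
      = Complex (\<Sum>j\<in>I. M i j * a j) (\<Sum>j\<in>I. M i j * b j)" for i
    by (simp add: complex_eq_iff Re_sum Im_sum)
  show "Re W = (\<Sum>i\<in>I. pa i * (\<Sum>j\<in>I. M i j * a j)) + (\<Sum>i\<in>I. pb i * (\<Sum>j\<in>I. M i j * b j))"
    unfolding W_def inner by (simp add: Re_sum sum.distrib)
  show "Im W = (\<Sum>i\<in>I. pa i * (\<Sum>j\<in>I. M i j * b j)) - (\<Sum>i\<in>I. pb i * (\<Sum>j\<in>I. M i j * a j))"
    unfolding W_def inner by (simp add: Im_sum sum_subtractf)
qed

lemma split_sum:
  fixes p X :: "nat \<Rightarrow> real"
  shows "(\<Sum>i\<in>A. (p i + c) * X i) = (\<Sum>i\<in>A. p i * X i) + c * (\<Sum>i\<in>A. X i)"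
  by (simp add: distrib_right sum.distrib sum_distrib_left)

context
  fixes n :: nat and u :: "nat \<Rightarrow> real" and U0 :: real
  assumes upos: "\<forall>i\<in>{1..n}. u i > 0" and U0: "U0 = 1 - (\<Sum>l=1..n. u l)" and U0pos: "U0 > 0"
begin

definition Pf :: "(nat \<Rightarrow> real) \<Rightarrow> nat \<Rightarrow> real" where
  "Pf y i = y i / u i + (\<Sum>l=1..n. y l) / U0"

lemma A_col:
  fixes e :: "nat \<Rightarrow> real" and m :: "nat \<Rightarrow> nat \<Rightarrow> real"
  assumes j: "j \<in> {1..n}"
  shows "(\<Sum>i=1..n. Pf y i * ((if i = j then e i else 0) + u i * (m i j - e j - (\<Sum>l=1..n. u l * m l j))))
     = y j * e j / u j + (\<Sum>i=1..n. y i * m i j)"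
proof -
  let ?c = "\<Sum>l=1..n. u l * m l j"
  let ?S = "\<Sum>l=1..n. y l"
  let ?s = "\<Sum>l=1..n. u l"
  have h1: "(\<Sum>i=1..n. y i / u i * ((if i = j then e i else 0) + u i * (m i j - e j - ?c)))
     = y j * e j / u j + (\<Sum>i=1..n. y i * m i j) - ?S * (e j + ?c)"
  proof -
    have "(\<Sum>i=1..n. y i / u i * ((if i = j then e i else 0) + u i * (m i j - e j - ?c)))
      = (\<Sum>i=1..n. (if i = j then y j * e j / u j else 0) + (y i * m i j - y i * (e j + ?c)))"
    proof (rule sum.cong[OF refl])
      fix i assume "i \<in> {1..n}"
      then have "u i \<noteq> 0" using upos by (metis less_irrefl)
      then show "y i / u i * ((if i = j then e i else 0) + u i * (m i j - e j - ?c)) =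
        (if i = j then y j * e j / u j else 0) + (y i * m i j - y i * (e j + ?c))"
        by (cases "i = j") (auto simp: field_simps)
    qed
    also have "\<dots> = y j * e j / u j + (\<Sum>i=1..n. y i * m i j) - ?S * (e j + ?c)"
      using j by (simp add: sum.distrib sum_subtractf sum_distrib_right)
    finally show ?thesis .
  qed
  have h2: "(\<Sum>i=1..n. ((if i = j then e i else 0) + u i * (m i j - e j - ?c))) = U0 * (e j + ?c)"
  proof -
    have "(\<Sum>i=1..n. ((if i = j then e i else 0) + u i * (m i j - e j - ?c)))
       = (\<Sum>i=1..n. (if i = j then e i else 0) + (u i * m i j - u i * (e j + ?c)))"
      by (rule sum.cong) (auto simp: algebra_simps)
    also have "\<dots> = e j + ?c - ?s * (e j + ?c)"
      using j by (simp add: sum.distrib sum_subtractf sum_distrib_right)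
    also have "\<dots> = (1 - ?s) * (e j + ?c)" by (simp only: left_diff_distrib mult_1_left)
    also have "\<dots> = U0 * (e j + ?c)" using U0 by simp
    finally show ?thesis .
  qed
  have "(\<Sum>i=1..n. Pf y i * ((if i = j then e i else 0) + u i * (m i j - e j - ?c)))
     = (\<Sum>i=1..n. y i / u i * ((if i = j then e i else 0) + u i * (m i j - e j - ?c)))
      + ?S / U0 * (\<Sum>i=1..n. ((if i = j then e i else 0) + u i * (m i j - e j - ?c)))"
    unfolding Pf_def by (rule split_sum)
  also have "\<dots> = y j * e j / u j + (\<Sum>i=1..n. y i * m i j)"
    unfolding h1 h2 using U0pos by (simp add: field_simps)
  finally show ?thesis .
qed


lemma K_col:
  fixes T a :: "nat \<Rightarrow> real" and kk :: "nat \<Rightarrow> nat \<Rightarrow> real"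
  assumes j: "j \<in> {1..n}"
  shows "(\<Sum>i=1..n. Pf y i * ((if i = j then T i else 0) + u i * (a i - kk i j)))
     = y j * T j / u j + (\<Sum>i=1..n. y i * (a i - kk i j))
       + (\<Sum>l=1..n. y l) / U0 * (T j + (\<Sum>i=1..n. u i * (a i - kk i j)))"
proof -
  have h1: "(\<Sum>i=1..n. y i / u i * ((if i = j then T i else 0) + u i * (a i - kk i j)))
     = (\<Sum>i=1..n. (if i = j then y j * T j / u j else 0) + y i * (a i - kk i j))"
  proof (rule sum.cong[OF refl])
    fix i assume "i \<in> {1..n}"
    then have "u i \<noteq> 0" using upos by (metis less_irrefl)
    then show "y i / u i * ((if i = j then T i else 0) + u i * (a i - kk i j)) =
        (if i = j then y j * T j / u j else 0) + y i * (a i - kk i j)"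
      by (cases "i = j") (auto simp: field_simps)
  qed
  have h2: "(\<Sum>i=1..n. ((if i = j then T i else 0) + u i * (a i - kk i j)))
     = T j + (\<Sum>i=1..n. u i * (a i - kk i j))"
    using j by (simp add: sum.distrib)
  have "(\<Sum>i=1..n. Pf y i * ((if i = j then T i else 0) + u i * (a i - kk i j)))
     = (\<Sum>i=1..n. y i / u i * ((if i = j then T i else 0) + u i * (a i - kk i j)))
      + (\<Sum>l=1..n. y l) / U0 * (\<Sum>i=1..n. ((if i = j then T i else 0) + u i * (a i - kk i j)))"
    unfolding Pf_def by (rule split_sum)
  also have "\<dots> = y j * T j / u j + (\<Sum>i=1..n. y i * (a i - kk i j))
       + (\<Sum>l=1..n. y l) / U0 * (T j + (\<Sum>i=1..n. u i * (a i - kk i j)))"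
    unfolding h1 h2 using j by (simp add: sum.distrib)
  finally show ?thesis .
qed


context
  fixes k :: "nat \<Rightarrow> nat \<Rightarrow> real"
  assumes ksym: "\<forall>i\<in>{0..n}. \<forall>j\<in>{0..n}. k i j = k j i"
begin

definition TT :: "nat \<Rightarrow> real" where
  "TT i = k i 0 * U0 + (\<Sum>l=1..n. k i l * u l)"
definition WW :: real where
  "WW = (\<Sum>i=1..n. u i * k i 0)"
definition Y0 :: "(nat \<Rightarrow> real) \<Rightarrow> real" where
  "Y0 y = (\<Sum>i=1..n. y i * k i 0)"
definition colK :: "(nat \<Rightarrow> real) \<Rightarrow> nat \<Rightarrow> real" where
  "colK y j = y j * TT j / u j + Y0 y - (\<Sum>i=1..n. y i * k i j)
     + (\<Sum>l=1..n. y l) * k j 0 + (\<Sum>l=1..n. y l) * WW / U0"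

lemma K_col':
  assumes j: "j \<in> {1..n}"
  shows "(\<Sum>i=1..n. Pf y i * ((if i = j then TT i else 0) + u i * (k i 0 - k i j))) = colK y j"
proof -
  have s1: "(\<Sum>i=1..n. u i * k i j) = (\<Sum>l=1..n. k j l * u l)"
    using ksym j by (intro sum.cong) (auto simp: mult.commute)
  have e1: "TT j + (\<Sum>i=1..n. u i * (k i 0 - k i j)) = k j 0 * U0 + WW"
    unfolding TT_def WW_def using s1 by (simp add: right_diff_distrib sum_subtractf)
  have e2: "(\<Sum>i=1..n. y i * (k i 0 - k i j)) = Y0 y - (\<Sum>i=1..n. y i * k i j)"
    unfolding Y0_def by (simp add: right_diff_distrib sum_subtractf)
  have "(\<Sum>i=1..n. Pf y i * ((if i = j then TT i else 0) + u i * (k i 0 - k i j)))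
     = y j * TT j / u j + (\<Sum>i=1..n. y i * (k i 0 - k i j))
       + (\<Sum>l=1..n. y l) / U0 * (TT j + (\<Sum>i=1..n. u i * (k i 0 - k i j)))"
    by (rule K_col[OF j])
  also have "\<dots> = colK y j" unfolding e1 e2 colK_def using U0pos
    by (simp add: field_simps)
  finally show ?thesis .

qed

definition BK :: "(nat \<Rightarrow> real) \<Rightarrow> (nat \<Rightarrow> real) \<Rightarrow> real" where
  "BK y z = (\<Sum>j=1..n. z j * colK y j)"

lemma BK_expand:
  "BK y z = (\<Sum>j=1..n. z j * y j * TT j / u j) + (\<Sum>l=1..n. z l) * Y0 y
     - (\<Sum>j=1..n. \<Sum>i=1..n. z j * y i * k i j) + (\<Sum>l=1..n. y l) * Y0 z
     + (\<Sum>l=1..n. z l) * (\<Sum>l=1..n. y l) * WW / U0"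
proof -
  have "BK y z = (\<Sum>j=1..n. z j * y j * TT j / u j) + (\<Sum>j=1..n. z j * Y0 y)
     - (\<Sum>j=1..n. z j * (\<Sum>i=1..n. y i * k i j)) + (\<Sum>j=1..n. z j * ((\<Sum>l=1..n. y l) * k j 0))
     + (\<Sum>j=1..n. z j * ((\<Sum>l=1..n. y l) * WW / U0))"
    unfolding BK_def colK_def by (simp add: algebra_simps sum.distrib sum_subtractf)
  also have "\<dots> = (\<Sum>j=1..n. z j * y j * TT j / u j) + (\<Sum>l=1..n. z l) * Y0 y
     - (\<Sum>j=1..n. \<Sum>i=1..n. z j * y i * k i j) + (\<Sum>l=1..n. y l) * Y0 z
     + (\<Sum>l=1..n. z l) * (\<Sum>l=1..n. y l) * WW / U0"
  proof -
    have p1: "(\<Sum>j=1..n. z j * Y0 y) = (\<Sum>l=1..n. z l) * Y0 y" by (rule sum_distrib_right[symmetric])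
    have p2: "(\<Sum>j=1..n. z j * (\<Sum>i=1..n. y i * k i j)) = (\<Sum>j=1..n. \<Sum>i=1..n. z j * y i * k i j)"
      by (simp add: sum_distrib_left mult_ac)
    have "(\<Sum>j=1..n. z j * ((\<Sum>l=1..n. y l) * k j 0)) = (\<Sum>j=1..n. (\<Sum>l=1..n. y l) * (z j * k j 0))"
      by (intro sum.cong) (simp_all add: mult_ac)
    also have "\<dots> = (\<Sum>l=1..n. y l) * Y0 z" unfolding Y0_def by (rule sum_distrib_left[symmetric])
    finally have p3: "(\<Sum>j=1..n. z j * ((\<Sum>l=1..n. y l) * k j 0)) = (\<Sum>l=1..n. y l) * Y0 z" .
    have p4: "(\<Sum>j=1..n. z j * ((\<Sum>l=1..n. y l) * WW / U0)) = (\<Sum>l=1..n. z l) * ((\<Sum>l=1..n. y l) * WW / U0)"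
      by (rule sum_distrib_right[symmetric])
    show ?thesis unfolding p1 p2 p3 p4 by (simp add: mult_ac)
  qed
  finally show ?thesis .
qed

lemma BK_sym: "BK y z = BK z y"
proof -
  have "(\<Sum>j=1..n. \<Sum>i=1..n. z j * y i * k i j) = (\<Sum>i=1..n. \<Sum>j=1..n. z j * y i * k i j)"
    by (rule sum.swap)
  also have "\<dots> = (\<Sum>j=1..n. \<Sum>i=1..n. y j * z i * k i j)"
    using ksym by (intro sum.cong refl) (auto simp: mult_ac)
  finally have "(\<Sum>j=1..n. \<Sum>i=1..n. z j * y i * k i j) = (\<Sum>j=1..n. \<Sum>i=1..n. y j * z i * k i j)" .
  then show ?thesis unfolding BK_expand by (simp add: mult_ac)
qed


lemma BK_pos:
  assumes k0: "\<forall>i\<in>{1..n}. k i 0 > 0" and knn: "\<forall>i\<in>{1..n}. \<forall>j\<in>{1..n}. k i j \<ge> 0"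
  shows "BK y y \<ge> 0 \<and> ((\<exists>i\<in>{1..n}. y i \<noteq> 0) \<longrightarrow> BK y y > 0)"
proof -
  define S where "S = (\<Sum>l=1..n. y l)"
  have un: "u i \<noteq> 0" if "i \<in> {1..n}" for i using upos that by (metis less_irrefl)
  define F1 where "F1 = (\<Sum>i=1..n. k i 0 * u i * U0 * (y i / u i + S / U0)^2)"
  define G where "G = (\<Sum>j=1..n. y j ^ 2 / u j * (\<Sum>l=1..n. k j l * u l))
      - (\<Sum>j=1..n. \<Sum>i=1..n. y j * y i * k i j)"
  define F2 where "F2 = (\<Sum>j=1..n. \<Sum>i=1..n. k i j * u i * u j * (y i / u i - y j / u j)^2)"
  have F1a: "F1 = (\<Sum>i=1..n. k i 0 * U0 * y i ^ 2 / u i) + 2 * S * Y0 y + S ^ 2 * WW / U0"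
  proof -
    have "F1 = (\<Sum>i=1..n. k i 0 * U0 * y i ^ 2 / u i + 2 * S * (y i * k i 0) + S ^ 2 / U0 * (u i * k i 0))"
      unfolding F1_def
    proof (rule sum.cong[OF refl])
      fix i assume "i \<in> {1..n}"
      then have "u i \<noteq> 0" by (rule un)
      then show "k i 0 * u i * U0 * (y i / u i + S / U0)^2 =
        k i 0 * U0 * y i ^ 2 / u i + 2 * S * (y i * k i 0) + S ^ 2 / U0 * (u i * k i 0)"
        using U0pos by (simp add: field_simps power2_eq_square)
    qed
    also have "\<dots> = (\<Sum>i=1..n. k i 0 * U0 * y i ^ 2 / u i) + 2 * S * Y0 y + S ^ 2 / U0 * WW"
      unfolding Y0_def WW_def by (simp add: sum.distrib sum_distrib_left)
    finally show ?thesis by simp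
  qed
  have BKa: "BK y y = (\<Sum>j=1..n. y j ^ 2 * TT j / u j) + 2 * S * Y0 y
      - (\<Sum>j=1..n. \<Sum>i=1..n. y j * y i * k i j) + S ^ 2 * WW / U0"
    unfolding BK_expand S_def[symmetric] by (simp add: power2_eq_square)
  have Ta: "(\<Sum>j=1..n. y j ^ 2 * TT j / u j) = (\<Sum>j=1..n. k j 0 * U0 * y j ^ 2 / u j)
     + (\<Sum>j=1..n. y j ^ 2 / u j * (\<Sum>l=1..n. k j l * u l))"
    unfolding TT_def sum.distrib[symmetric] by (intro sum.cong refl) (simp add: algebra_simps add_divide_distrib)
  have BKF: "BK y y = F1 + G"
    unfolding BKa F1a Ta G_def by simp
  have F2G: "F2 = 2 * G" unfolding F2_def G_def
    by (rule F2_expand[of n u, OF un ksym])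
  have F2nn: "F2 \<ge> 0"
  proof -
    have un0: "u i \<ge> 0" if "i \<in> {1..n}" for i using upos that by force
    show ?thesis unfolding F2_def using knn
      by (intro sum_nonneg) (auto intro!: mult_nonneg_nonneg un0)
  qed
  have F1terms: "\<forall>i\<in>{1..n}. k i 0 * u i * U0 * (y i / u i + S / U0)^2 \<ge> 0"
    using k0 upos U0pos by (auto intro!: mult_nonneg_nonneg)
  have F1nn: "F1 \<ge> 0" unfolding F1_def using F1terms by (intro sum_nonneg) auto
  have nn: "BK y y \<ge> 0" using BKF F2G F2nn F1nn by linarith
  have pos: "(\<exists>i\<in>{1..n}. y i \<noteq> 0) \<longrightarrow> BK y y > 0"
  proof
  assume ex: "\<exists>i\<in>{1..n}. y i \<noteq> 0"
  have "F1 > 0"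
  proof (rule ccontr)
    assume "\<not> F1 > 0"
    then have "F1 = 0" using F1nn by simp
    then have all0: "\<forall>i\<in>{1..n}. k i 0 * u i * U0 * (y i / u i + S / U0)^2 = 0"
      unfolding F1_def using F1terms by (subst (asm) sum_nonneg_eq_0_iff) auto
    define s where "s = (\<Sum>i=1..n. u i)"
    have U0s: "U0 + s = 1" unfolding s_def using U0 by simp
    have yi: "y i = - u i * S / U0" if i: "i \<in> {1..n}" for i
    proof -
      have "k i 0 > 0" "u i > 0" using k0 upos i by auto
      then have "k i 0 * u i * U0 \<noteq> 0" using U0pos by simp
      then have "(y i / u i + S / U0)^2 = 0" using all0 i by auto
      then have "y i / u i + S / U0 = 0" by simp
      then show ?thesis using un[OF i] U0pos by (simp add: field_simps)
    qed
    have "S = (\<Sum>i=1..n. y i)" by (rule S_def)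
    also have "\<dots> = (\<Sum>i=1..n. - u i * S / U0)" using yi by (intro sum.cong) auto
    also have "\<dots> = - s * S / U0" unfolding s_def by (simp add: sum_distrib_right sum_divide_distrib sum_negf)
    finally have "S = - s * S / U0" .
    then have "S * U0 = - s * S" using U0pos by (simp add: field_simps)
    then have "S * (U0 + s) = 0" by (simp add: algebra_simps)
    then have S0: "S = 0" using U0s by simp
    from ex obtain i where i: "i \<in> {1..n}" "y i \<noteq> 0" by blast
    have "y i = - u i * S / U0" by (rule yi[OF i(1)])
    also have "\<dots> = 0" unfolding S0 by simp
    finally show False using i(2) by blast
  qed
  then show "BK y y > 0" using BKF F2G F2nn by linarith
  qed
  show ?thesis using nn pos by blast
qed


lemma KX_eq_BK:
  "(\<Sum>i=1..n. Pf y i * (\<Sum>j=1..n. ((if i = j then TT i else 0) + u i * (k i 0 - k i j)) * z j)) = BK y z"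
  unfolding bswap BK_def
proof (intro sum.cong refl)
  fix j assume "j \<in> {1..n}"
  then show "z j * (\<Sum>i=1..n. Pf y i * ((if i = j then TT i else 0) + u i * (k i 0 - k i j))) = z j * colK y j"
    using K_col' by simp
qed

lemma K_export_sym:
  "(\<Sum>i=1..n. (y i / u i + (\<Sum>l=1..n. y l) / U0) * (\<Sum>j=1..n. ((if i = j then k i 0 * U0 + (\<Sum>l=1..n. k i l * u l) else 0) + u i * (k i 0 - k i j)) * z j))
   = (\<Sum>i=1..n. (z i / u i + (\<Sum>l=1..n. z l) / U0) * (\<Sum>j=1..n. ((if i = j then k i 0 * U0 + (\<Sum>l=1..n. k i l * u l) else 0) + u i * (k i 0 - k i j)) * y j))"
  using KX_eq_BK[of y z] KX_eq_BK[of z y] BK_sym[of y z] unfolding Pf_def TT_def by simp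

lemma K_export_pos:
  assumes k0: "\<forall>i\<in>{1..n}. k i 0 > 0" and knn: "\<forall>i\<in>{1..n}. \<forall>j\<in>{1..n}. k i j \<ge> 0"
  shows "(\<Sum>i=1..n. (y i / u i + (\<Sum>l=1..n. y l) / U0) * (\<Sum>j=1..n. ((if i = j then k i 0 * U0 + (\<Sum>l=1..n. k i l * u l) else 0) + u i * (k i 0 - k i j)) * y j)) \<ge> 0
     \<and> ((\<exists>i\<in>{1..n}. y i \<noteq> 0) \<longrightarrow> (\<Sum>i=1..n. (y i / u i + (\<Sum>l=1..n. y l) / U0) * (\<Sum>j=1..n. ((if i = j then k i 0 * U0 + (\<Sum>l=1..n. k i l * u l) else 0) + u i * (k i 0 - k i j)) * y j)) > 0)"
  using KX_eq_BK[of y y] BK_pos[OF k0 knn, of y] unfolding Pf_def TT_def by simp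

end

lemma A_export:
  fixes e :: "nat \<Rightarrow> real" and m :: "nat \<Rightarrow> nat \<Rightarrow> real"
  shows "(\<Sum>i=1..n. (y i / u i + (\<Sum>l=1..n. y l) / U0) * (\<Sum>j=1..n. ((if i = j then e i else 0) + u i * (m i j - e j - (\<Sum>l=1..n. u l * m l j))) * y j))
    = (\<Sum>j=1..n. y j * (y j * e j / u j)) + (\<Sum>j=1..n. \<Sum>i=1..n. y j * y i * m i j)"
proof -
  have "(\<Sum>i=1..n. Pf y i * (\<Sum>j=1..n. ((if i = j then e i else 0) + u i * (m i j - e j - (\<Sum>l=1..n. u l * m l j))) * y j))
    = (\<Sum>j=1..n. y j * (y j * e j / u j + (\<Sum>i=1..n. y i * m i j)))"
    unfolding bswap
  proof (intro sum.cong refl)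
    fix j assume "j \<in> {1..n}"
    then show "y j * (\<Sum>i=1..n. Pf y i * ((if i = j then e i else 0) + u i * (m i j - e j - (\<Sum>l=1..n. u l * m l j))))
       = y j * (y j * e j / u j + (\<Sum>i=1..n. y i * m i j))"
      using A_col by simp
  qed
  also have "\<dots> = (\<Sum>j=1..n. y j * (y j * e j / u j)) + (\<Sum>j=1..n. \<Sum>i=1..n. y j * y i * m i j)"
    by (simp add: distrib_left sum.distrib sum_distrib_left mult_ac)
  finally show ?thesis unfolding Pf_def .
qed

end

lemma mv_conv:
  fixes f :: "nat \<Rightarrow> nat \<Rightarrow> 'a::comm_semiring_1"
  assumes i: "i \<in> {1..n}" and v: "v \<in> carrier_vec n"
  shows "(mat n n (\<lambda>(i, j). f (Suc i) (Suc j)) *\<^sub>v v) $ (i - 1) = (\<Sum>j=1..n. f i j * v $ (j - 1))"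
proof -
  have i1: "i - 1 < n" "Suc (i - 1) = i" using i by auto
  have "(mat n n (\<lambda>(i, j). f (Suc i) (Suc j)) *\<^sub>v v) $ (i - 1) = (\<Sum>j<n. f i (Suc j) * v $ j)"
    using i1 v by (simp add: scalar_prod_def lessThan_atLeast0)
  also have "\<dots> = (\<Sum>j=1..n. f i j * v $ (j - 1))"
    by (simp add: sum.atLeast1_atMost_eq)
  finally show ?thesis .
qed

lemma map_mat_mat:
  "map_mat g (mat n n (\<lambda>(i, j). F i j)) = mat n n (\<lambda>(i, j). g (F i j))"
  by (rule eq_matI) auto

theorem proposition11:
  fixes n :: nat and k q r :: "nat \<Rightarrow> nat \<Rightarrow> real" and u :: "nat \<Rightarrow> real"
  assumes n: "n \<ge> 1"
    and k_sym: "\<forall>i\<in>{0..n}. \<forall>j\<in>{0..n}. k i j = k j i"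
    and k_pos: "\<forall>i\<in>{0..n}. \<forall>j\<in>{0..n}. i \<noteq> j \<longrightarrow> k i j > 0"
    and k_diag: "\<forall>i\<in>{0..n}. k i i = 0"
    and q_nonneg: "\<forall>i\<in>{0..n}. \<forall>j\<in>{0..n}. q i j \<ge> 0"
    and r_sym: "\<forall>i\<in>{0..n}. \<forall>j\<in>{0..n}. r i j = r j i"
    and r_nonneg: "\<forall>i\<in>{0..n}. \<forall>j\<in>{0..n}. r i j \<ge> 0"
    and q_zero: "\<forall>i\<in>{0..n}. q i 0 = 0 \<and> q 0 i = 0"
    and r_zero: "\<forall>i\<in>{0..n}. r i 0 = 0 \<and> r i i = 0"
    and qr_pd: "pos_def_sym (mat n n (\<lambda>(i, j). q (Suc i) (Suc j) + r (Suc i) (Suc j)))"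
    and q_ge_r: "\<forall>i\<in>{1..n}. \<forall>j\<in>{1..n}. q i j \<ge> r i j"
    and u: "in_D n u"
  shows "invertible_mat (K_mat n k u) \<and>
         (\<forall>Kinv \<in> carrier_mat n n. inverts_mat (K_mat n k u) Kinv \<longrightarrow>
            positively_stable (Kinv * A_mat n q r u))"
proof -
  define U0 where "U0 = u0 n u"
  have upos: "\<forall>i\<in>{1..n}. u i > 0" using u unfolding in_D_def by auto
  have U0eq: "U0 = 1 - (\<Sum>l=1..n. u l)" unfolding U0_def u0_def ..
  have U0pos: "U0 > 0" using u unfolding in_D_def U0eq by simp
  have k0: "\<forall>i\<in>{1..n}. k i 0 > 0" using k_pos by auto
  have knn: "\<forall>i\<in>{1..n}. \<forall>j\<in>{1..n}. k i j \<ge> 0"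
  proof (intro ballI)
    fix i j assume "i \<in> {1..n}" "j \<in> {1..n}"
    then show "k i j \<ge> 0" using k_pos k_diag by (cases "i = j") (auto intro: less_imp_le)
  qed
  define Kx where "Kx = (\<lambda>i j. (if i = j then k i 0 * U0 + (\<Sum>l=1..n. k i l * u l) else 0) + u i * (k i 0 - k i j))"
  have Kent: "K_entry n k u i j = Kx i j" if ij: "i \<in> {1..n}" "j \<in> {1..n}" for i j
  proof -
    have s1: "(\<Sum>l=1..n. k i l * ufull n u l) = (\<Sum>l=1..n. k i l * u l)"
      by (intro sum.cong) (auto simp: ufull_def)
    have "(\<Sum>l=0..n. k i l * ufull n u l) = k i 0 * ufull n u 0 + (\<Sum>l=Suc 0..n. k i l * ufull n u l)"
      by (rule sum.atLeast_Suc_atMost) simp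
    also have "\<dots> = k i 0 * U0 + (\<Sum>l=1..n. k i l * u l)"
      using s1 by (simp add: ufull_def U0_def)
    finally have T: "(\<Sum>l=0..n. k i l * ufull n u l) = k i 0 * U0 + (\<Sum>l=1..n. k i l * u l)" .
    have kii: "k i i = 0" using k_diag ij by auto
    show ?thesis unfolding K_entry_def Kx_def T using kii by (auto simp: algebra_simps)
  qed
  define e where "e = (\<lambda>i. qv n q u i - qv n r u i)"
  define m where "m = (\<lambda>i j. q i j + r i j)"
  define Ax where "Ax = (\<lambda>i j. (if i = j then e i else 0) + u i * (m i j - e j - (\<Sum>l=1..n. u l * m l j)))"
  have Aent: "A_entry n q r u i j = Ax i j" for i j
    unfolding A_entry_def Ax_def e_def m_def by (simp add: algebra_simps)
  have e_nn: "e j \<ge> 0" if "j \<in> {1..n}" for j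
  proof -
    have "e j = (\<Sum>l=1..n. (q j l - r j l) * u l)"
      unfolding e_def qv_def by (simp add: sum_subtractf left_diff_distrib)
    also have "\<dots> \<ge> 0"
    proof (rule sum_nonneg)
      fix l assume l: "l \<in> {1..n}"
      have a: "q j l - r j l \<ge> 0" using q_ge_r that l by auto
      have b: "u l > 0" using upos l by blast
      show "(q j l - r j l) * u l \<ge> 0" using a b by simp
    qed
    finally show ?thesis .
  qed
  have mpos: "(\<Sum>j=1..n. \<Sum>i=1..n. y j * y i * m i j) > 0" if ex: "\<exists>i\<in>{1..n}. y i \<noteq> 0" for y
  proof -
    define M where "M = mat n n (\<lambda>(i, j). q (Suc i) (Suc j) + r (Suc i) (Suc j))"
    define v where "v = vec n (\<lambda>i. y (Suc i))"
    have v: "v \<in> carrier_vec n" unfolding v_def by simp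
    from ex obtain i where i: "i \<in> {1..n}" "y i \<noteq> 0" by blast
    have "v $ (i - 1) \<noteq> 0" using i unfolding v_def by auto
    then have v0: "v \<noteq> 0\<^sub>v n" using i by auto
    have "v \<bullet> (((1/2) \<cdot>\<^sub>m (M + transpose_mat M)) *\<^sub>v v) > 0"
      using qr_pd v v0 unfolding pos_def_sym_def M_def by auto
    also have "v \<bullet> (((1/2) \<cdot>\<^sub>m (M + transpose_mat M)) *\<^sub>v v)
       = (\<Sum>i<n. y (Suc i) * (\<Sum>j<n. (1/2) * (m (Suc i) (Suc j) + m (Suc j) (Suc i)) * y (Suc j)))"
      unfolding M_def v_def m_def by (simp add: scalar_prod_def lessThan_atLeast0)
    also have "\<dots> = (1/2) * (\<Sum>i<n. \<Sum>j<n. y (Suc i) * y (Suc j) * m (Suc i) (Suc j))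
        + (1/2) * (\<Sum>i<n. \<Sum>j<n. y (Suc i) * y (Suc j) * m (Suc j) (Suc i))"
      by (simp add: sum_distrib_left sum.distrib algebra_simps)
    also have "(\<Sum>i<n. \<Sum>j<n. y (Suc i) * y (Suc j) * m (Suc i) (Suc j))
        = (\<Sum>j<n. \<Sum>i<n. y (Suc i) * y (Suc j) * m (Suc i) (Suc j))" by (rule sum.swap)
    also have "(\<Sum>j<n. \<Sum>i<n. y (Suc i) * y (Suc j) * m (Suc i) (Suc j))
        = (\<Sum>j=1..n. \<Sum>i=1..n. y j * y i * m i j)"
      by (simp add: sum.atLeast1_atMost_eq mult_ac)
    also have "(\<Sum>i<n. \<Sum>j<n. y (Suc i) * y (Suc j) * m (Suc j) (Suc i))
        = (\<Sum>j=1..n. \<Sum>i=1..n. y j * y i * m i j)"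
      by (simp add: sum.atLeast1_atMost_eq mult_ac)
    finally show ?thesis by simp
  qed
  have Kform_sym: "(\<Sum>i=1..n. (y i / u i + (\<Sum>l=1..n. y l) / U0) * (\<Sum>j=1..n. Kx i j * z j))
      = (\<Sum>i=1..n. (z i / u i + (\<Sum>l=1..n. z l) / U0) * (\<Sum>j=1..n. Kx i j * y j))" for y z
    unfolding Kx_def by (rule K_export_sym[OF upos U0eq U0pos k_sym])
  have Kform_pos: "(\<Sum>i=1..n. (y i / u i + (\<Sum>l=1..n. y l) / U0) * (\<Sum>j=1..n. Kx i j * y j)) \<ge> 0
     \<and> ((\<exists>i\<in>{1..n}. y i \<noteq> 0) \<longrightarrow> (\<Sum>i=1..n. (y i / u i + (\<Sum>l=1..n. y l) / U0) * (\<Sum>j=1..n. Kx i j * y j)) > 0)" for y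
    unfolding Kx_def by (rule K_export_pos[OF upos U0eq U0pos k_sym k0 knn])
  have Aform: "(\<Sum>i=1..n. (y i / u i + (\<Sum>l=1..n. y l) / U0) * (\<Sum>j=1..n. Ax i j * y j))
     = (\<Sum>j=1..n. y j * (y j * e j / u j)) + (\<Sum>j=1..n. \<Sum>i=1..n. y j * y i * m i j)" for y
    unfolding Ax_def by (rule A_export[OF upos U0eq U0pos])
  have Aform_pos: "(\<Sum>i=1..n. (y i / u i + (\<Sum>l=1..n. y l) / U0) * (\<Sum>j=1..n. Ax i j * y j)) \<ge> 0
     \<and> ((\<exists>i\<in>{1..n}. y i \<noteq> 0) \<longrightarrow> (\<Sum>i=1..n. (y i / u i + (\<Sum>l=1..n. y l) / U0) * (\<Sum>j=1..n. Ax i j * y j)) > 0)" for y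
  proof -
    have d: "(\<Sum>j=1..n. y j * (y j * e j / u j)) \<ge> 0"
    proof (rule sum_nonneg)
      fix j assume j: "j \<in> {1..n}"
      have a: "e j \<ge> 0" using e_nn j by blast
      have b: "u j > 0" using upos j by blast
      have c: "y j * y j \<ge> 0" by simp
      have "y j * y j * e j / u j \<ge> 0" by (rule divide_nonneg_pos[OF mult_nonneg_nonneg[OF c a] b])
      then show "y j * (y j * e j / u j) \<ge> 0" by (simp add: mult.assoc)
    qed
    have q0: "(\<Sum>j=1..n. \<Sum>i=1..n. y j * y i * m i j) \<ge> 0"
    proof (cases "\<exists>i\<in>{1..n}. y i \<noteq> 0")
      case True then show ?thesis using mpos[OF True] by simp
    next
      case False then have "\<forall>i\<in>{1..n}. y i = 0" by auto
      then show ?thesis by simp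
    qed
    show ?thesis unfolding Aform
    proof (intro conjI impI)
      show "0 \<le> (\<Sum>j=1..n. y j * (y j * e j / u j)) + (\<Sum>j=1..n. \<Sum>i=1..n. y j * y i * m i j)"
        using d q0 by linarith
    next
      assume ex: "\<exists>i\<in>{1..n}. y i \<noteq> 0"
      show "0 < (\<Sum>j=1..n. y j * (y j * e j / u j)) + (\<Sum>j=1..n. \<Sum>i=1..n. y j * y i * m i j)"
        using d mpos[OF ex] by linarith
    qed
  qed
  have Km: "K_mat n k u \<in> carrier_mat n n" unfolding K_mat_def by simp
  have Am: "A_mat n q r u \<in> carrier_mat n n" unfolding A_mat_def by simp
  have Kmv: "(K_mat n k u *\<^sub>v v) $ (i - 1) = (\<Sum>j=1..n. Kx i j * v $ (j - 1))"
    if iv: "i \<in> {1..n}" "v \<in> carrier_vec n" for i v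
  proof -
    have "(K_mat n k u *\<^sub>v v) $ (i - 1) = (\<Sum>j=1..n. K_entry n k u i j * v $ (j - 1))"
      unfolding K_mat_def by (rule mv_conv[where f="K_entry n k u", OF iv])
    also have "\<dots> = (\<Sum>j=1..n. Kx i j * v $ (j - 1))"
    proof (rule sum.cong[OF refl])
      fix j assume "j \<in> {1..n}"
      then show "K_entry n k u i j * v $ (j - 1) = Kx i j * v $ (j - 1)" using Kent iv(1) by simp
    qed
    finally show ?thesis .
  qed
  have nz: "\<exists>i<n. v $ i \<noteq> 0" if "v \<in> carrier_vec n" "v \<noteq> 0\<^sub>v n" for v :: "'z::zero vec"
  proof (rule ccontr)
    assume "\<not> (\<exists>i<n. v $ i \<noteq> 0)"
    then have "v = 0\<^sub>v n" using that(1) by (intro eq_vecI) auto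
    then show False using that(2) by simp
  qed
  have Kinj: "v = 0\<^sub>v n" if v: "v \<in> carrier_vec n" and Kv: "K_mat n k u *\<^sub>v v = 0\<^sub>v n" for v
  proof (rule ccontr)
    assume "v \<noteq> 0\<^sub>v n"
    then obtain i0 where i0: "i0 < n" "v $ i0 \<noteq> 0" using nz v by blast
    define y where "y = (\<lambda>l. v $ (l - 1))"
    have ex: "\<exists>i\<in>{1..n}. y i \<noteq> 0" using i0 unfolding y_def by (intro bexI[of _ "Suc i0"]) auto
    have Ky0: "(\<Sum>j=1..n. Kx i j * y j) = 0" if i: "i \<in> {1..n}" for i
    proof -
      have "(\<Sum>j=1..n. Kx i j * y j) = (K_mat n k u *\<^sub>v v) $ (i - 1)"
        unfolding y_def using Kmv[OF i v] by simp
      also have "\<dots> = 0"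
      proof -
        have "i - 1 < n" using i by auto
        then show ?thesis unfolding Kv by simp
      qed
      finally show ?thesis .
    qed
    have "(\<Sum>i=1..n. (y i / u i + (\<Sum>l=1..n. y l) / U0) * (\<Sum>j=1..n. Kx i j * y j)) = 0"
      using Ky0 by (intro sum.neutral) auto
    then show False using Kform_pos[of y] ex by simp
  qed
  have detK: "det (K_mat n k u) \<noteq> 0"
    using det_0_iff_vec_prod_zero_field[OF Km] Kinj by blast
  have "K_mat n k u \<in> Units (ring_mat TYPE(real) n ())"
    by (rule det_non_zero_imp_unit[OF Km detK])
  then obtain B where B: "B \<in> carrier_mat n n" "B * K_mat n k u = 1\<^sub>m n" "K_mat n k u * B = 1\<^sub>m n"
    unfolding Units_def ring_mat_def by auto
  have inv: "invertible_mat (K_mat n k u)"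
    unfolding invertible_mat_def inverts_mat_def square_mat.simps using Km B
    by (intro conjI exI[of _ B]) auto
  have stab: "positively_stable (Kinv * A_mat n q r u)"
    if Kinv: "Kinv \<in> carrier_mat n n" and KK: "inverts_mat (K_mat n k u) Kinv" for Kinv
    unfolding positively_stable_def
  proof (intro allI impI)
    fix ev assume "eigenvalue (map_mat complex_of_real (Kinv * A_mat n q r u)) ev"
    then obtain x where x: "x \<in> carrier_vec n" "x \<noteq> 0\<^sub>v n"
      and ex: "map_mat complex_of_real (Kinv * A_mat n q r u) *\<^sub>v x = ev \<cdot>\<^sub>v x"
      unfolding eigenvalue_def eigenvector_def using Kinv Am by auto
    have KKi: "K_mat n k u * Kinv = 1\<^sub>m n" using KK Km unfolding inverts_mat_def by simp
    have "K_mat n k u * (Kinv * A_mat n q r u) = A_mat n q r u"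
      using Km Kinv Am KKi by (simp add: assoc_mult_mat[symmetric, of _ n n _ n _ n])
    note KA = this
    have "map_mat complex_of_real (K_mat n k u * (Kinv * A_mat n q r u))
        = map_mat complex_of_real (K_mat n k u) * map_mat complex_of_real (Kinv * A_mat n q r u)"
      by (rule of_real_hom.mat_hom_mult[OF Km mult_carrier_mat[OF Kinv Am]])
    then have KM: "map_mat complex_of_real (K_mat n k u) * map_mat complex_of_real (Kinv * A_mat n q r u)
        = map_mat complex_of_real (A_mat n q r u)"
      unfolding KA by simp
    have Kc: "map_mat complex_of_real (K_mat n k u) \<in> carrier_mat n n" using Km by simp
    have Mc: "map_mat complex_of_real (Kinv * A_mat n q r u) \<in> carrier_mat n n" using Kinv Am by simp
    have AKx: "map_mat complex_of_real (A_mat n q r u) *\<^sub>v x = ev \<cdot>\<^sub>v (map_mat complex_of_real (K_mat n k u) *\<^sub>v x)"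
    proof -
      have "map_mat complex_of_real (A_mat n q r u) *\<^sub>v x
         = map_mat complex_of_real (K_mat n k u) *\<^sub>v (map_mat complex_of_real (Kinv * A_mat n q r u) *\<^sub>v x)"
        unfolding KM[symmetric] using Kc Mc x by simp
      also have "\<dots> = ev \<cdot>\<^sub>v (map_mat complex_of_real (K_mat n k u) *\<^sub>v x)"
        unfolding ex by (rule mult_mat_vec[OF Kc x(1)])
      finally show ?thesis .
    qed
    define a where "a = (\<lambda>l. Re (x $ (l - 1)))"
    define b where "b = (\<lambda>l. Im (x $ (l - 1)))"
    have xab: "x $ (j - 1) = Complex (a j) (b j)" for j unfolding a_def b_def by simp
    have xab': "x $ (j - Suc 0) = Complex (a j) (b j)" for j using xab[of j] by simp
    have Aci: "(map_mat complex_of_real (A_mat n q r u) *\<^sub>v x) $ (i - 1)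
        = (\<Sum>j=1..n. complex_of_real (Ax i j) * Complex (a j) (b j))" if i: "i \<in> {1..n}" for i
    proof -
      have "(map_mat complex_of_real (A_mat n q r u) *\<^sub>v x) $ (i - 1)
          = (\<Sum>j=1..n. complex_of_real (A_entry n q r u i j) * x $ (j - 1))"
        unfolding A_mat_def map_mat_mat by (rule mv_conv[where f="\<lambda>i j. complex_of_real (A_entry n q r u i j)", OF i x(1)])
      then show ?thesis by (simp add: Aent xab xab')
    qed
    have Kci: "(map_mat complex_of_real (K_mat n k u) *\<^sub>v x) $ (i - 1)
        = (\<Sum>j=1..n. complex_of_real (Kx i j) * Complex (a j) (b j))" if i: "i \<in> {1..n}" for i
    proof -
      have "(map_mat complex_of_real (K_mat n k u) *\<^sub>v x) $ (i - 1)
          = (\<Sum>j=1..n. complex_of_real (K_entry n k u i j) * x $ (j - 1))"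
        unfolding K_mat_def map_mat_mat by (rule mv_conv[where f="\<lambda>i j. complex_of_real (K_entry n k u i j)", OF i x(1)])
      also have "\<dots> = (\<Sum>j=1..n. complex_of_real (Kx i j) * Complex (a j) (b j))"
      proof (rule sum.cong[OF refl])
        fix j assume "j \<in> {1..n}"
        then show "complex_of_real (K_entry n k u i j) * x $ (j - 1) = complex_of_real (Kx i j) * Complex (a j) (b j)"
          using Kent i xab xab' by simp
      qed
      finally show ?thesis .
    qed
    have eqi: "(\<Sum>j=1..n. complex_of_real (Ax i j) * Complex (a j) (b j))
        = ev * (\<Sum>j=1..n. complex_of_real (Kx i j) * Complex (a j) (b j))" if i: "i \<in> {1..n}" for i
    proof -
      have i1: "i - 1 < n" using i by auto
      have "(map_mat complex_of_real (A_mat n q r u) *\<^sub>v x) $ (i - 1)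
         = ev * (map_mat complex_of_real (K_mat n k u) *\<^sub>v x) $ (i - 1)"
        unfolding AKx using i1 Km by simp
      then show ?thesis using Aci[OF i] Kci[OF i] by simp
    qed
    define pa where "pa = (\<lambda>i. a i / u i + (\<Sum>l=1..n. a l) / U0)"
    define pb where "pb = (\<lambda>i. b i / u i + (\<Sum>l=1..n. b l) / U0)"
    define WA where "WA = (\<Sum>i\<in>{1..n}. (complex_of_real (pa i) - \<i> * complex_of_real (pb i)) *
      (\<Sum>j\<in>{1..n}. complex_of_real (Ax i j) * Complex (a j) (b j)))"
    define WK where "WK = (\<Sum>i\<in>{1..n}. (complex_of_real (pa i) - \<i> * complex_of_real (pb i)) *
      (\<Sum>j\<in>{1..n}. complex_of_real (Kx i j) * Complex (a j) (b j)))"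
    have WAK: "WA = ev * WK"
      unfolding WA_def WK_def sum_distrib_left[of ev]
    proof (rule sum.cong[OF refl])
      fix i assume i: "i \<in> {1..n}"
      show "(complex_of_real (pa i) - \<i> * complex_of_real (pb i)) *
          (\<Sum>j\<in>{1..n}. complex_of_real (Ax i j) * Complex (a j) (b j))
        = ev * ((complex_of_real (pa i) - \<i> * complex_of_real (pb i)) *
          (\<Sum>j\<in>{1..n}. complex_of_real (Kx i j) * Complex (a j) (b j)))"
        unfolding eqi[OF i] by (simp only: mult_ac)
    qed
    have ReWK: "Re WK = (\<Sum>i=1..n. pa i * (\<Sum>j=1..n. Kx i j * a j)) + (\<Sum>i=1..n. pb i * (\<Sum>j=1..n. Kx i j * b j))"
      unfolding WK_def by (rule cform(1))
    have ImWK: "Im WK = (\<Sum>i=1..n. pa i * (\<Sum>j=1..n. Kx i j * b j)) - (\<Sum>i=1..n. pb i * (\<Sum>j=1..n. Kx i j * a j))"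
      unfolding WK_def by (rule cform(2))
    have ReWA: "Re WA = (\<Sum>i=1..n. pa i * (\<Sum>j=1..n. Ax i j * a j)) + (\<Sum>i=1..n. pb i * (\<Sum>j=1..n. Ax i j * b j))"
      unfolding WA_def by (rule cform(1))
    have ImWK0: "Im WK = 0" unfolding ImWK pa_def pb_def using Kform_sym[of a b] by simp
    have exab: "(\<exists>i\<in>{1..n}. a i \<noteq> 0) \<or> (\<exists>i\<in>{1..n}. b i \<noteq> 0)"
    proof -
      obtain i0 where i0: "i0 < n" "x $ i0 \<noteq> 0" using nz x by blast
      then have "a (Suc i0) \<noteq> 0 \<or> b (Suc i0) \<noteq> 0" unfolding a_def b_def by (auto simp: complex_eq_iff)
      then show ?thesis using i0 by force
    qed
    have ReWKpos: "Re WK > 0"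
      using Kform_pos[of a] Kform_pos[of b] exab unfolding ReWK pa_def pb_def by auto
    have ReWApos: "Re WA > 0"
      using Aform_pos[of a] Aform_pos[of b] exab unfolding ReWA pa_def pb_def by auto
    define c where "c = Re WK"
    have WKc: "WK = complex_of_real c" unfolding c_def using ImWK0 by (simp add: complex_eq_iff)
    have "Re WA = Re ev * c" unfolding WAK WKc by simp
    then have "Re WA = Re ev * Re WK" unfolding c_def .
    then have "Re ev * Re WK > 0" using ReWApos by simp
    then show "Re ev > 0" using ReWKpos by (simp add: zero_less_mult_iff)
  qed
  show ?thesis using inv stab by blast
qed

end
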